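(* Let $A$ be a commutative ring with $1\ne0$ and let $|$ be a divisibility on $A$ that has cancellation. Then the support $I(|)$ is a prime ideal of $A$.
   Context: A divisibility on $A$ is a binary relation $|\subseteq A\times A$ such that for all $a,b,c\in A$: (1) $a|a$; (2) $a|b,\ b|c\Rightarrow a|c$; (3) $a|b,\ a|c\Rightarrow a|b-c$; (4) $a|b\Rightarrow ac|bc$; (5) $0\nmid 1$. Its support is $I(|)=\{a\in A;\ 0|a\}$ (a proper ideal). $|$ has cancellation if for all $c\in A$ with $0\nmid c$ and all $a,b\in A$, $ac|bc$ implies $a|b$. *)

theory Defs
  imports "HOL-Algebra.Algebra"
begin

definition divisibility :: "('a, 'b) ring_scheme \<Rightarrow> ('a \<Rightarrow> 'a \<Rightarrow> bool) \<Rightarrow> bool" where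
  "divisibility R d \<longleftrightarrow>
     (\<forall>a \<in> carrier R. d a a) \<and>
     (\<forall>a \<in> carrier R. \<forall>b \<in> carrier R. \<forall>c \<in> carrier R. d a b \<and> d b c \<longrightarrow> d a c) \<and>
     (\<forall>a \<in> carrier R. \<forall>b \<in> carrier R. \<forall>c \<in> carrier R. d a b \<and> d a c \<longrightarrow> d a (b \<ominus>\<^bsub>R\<^esub> c)) \<and>
     (\<forall>a \<in> carrier R. \<forall>b \<in> carrier R. \<forall>c \<in> carrier R. d a b \<longrightarrow> d (a \<otimes>\<^bsub>R\<^esub> c) (b \<otimes>\<^bsub>R\<^esub> c)) \<and>
     \<not> d \<zero>\<^bsub>R\<^esub> \<one>\<^bsub>R\<^esub>"

definition div_support :: "('a, 'b) ring_scheme \<Rightarrow> ('a \<Rightarrow> 'a \<Rightarrow> bool) \<Rightarrow> 'a set" where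
  "div_support R d = {a \<in> carrier R. d \<zero>\<^bsub>R\<^esub> a}"

definition has_cancellation :: "('a, 'b) ring_scheme \<Rightarrow> ('a \<Rightarrow> 'a \<Rightarrow> bool) \<Rightarrow> bool" where
  "has_cancellation R d \<longleftrightarrow>
     (\<forall>c \<in> carrier R. \<not> d \<zero>\<^bsub>R\<^esub> c \<longrightarrow>
        (\<forall>a \<in> carrier R. \<forall>b \<in> carrier R. d (a \<otimes>\<^bsub>R\<^esub> c) (b \<otimes>\<^bsub>R\<^esub> c) \<longrightarrow> d a b))"

end

theory Submission
  imports Defs
begin

lemma (in cring) prop_aux:
  assumes "divisibility R d"
    and "has_cancellation R d"
  shows "primeideal (div_support R d) R"
proof -
  let ?I = "div_support R d"
  have refl: "\<And>a. a \<in> carrier R \<Longrightarrow> d a a" and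
    sub: "\<And>a b c. a \<in> carrier R \<Longrightarrow> b \<in> carrier R \<Longrightarrow> c \<in> carrier R \<Longrightarrow> d a b \<Longrightarrow> d a c \<Longrightarrow> d a (b \<ominus> c)" and
    mul: "\<And>a b c. a \<in> carrier R \<Longrightarrow> b \<in> carrier R \<Longrightarrow> c \<in> carrier R \<Longrightarrow> d a b \<Longrightarrow> d (a \<otimes> c) (b \<otimes> c)" and
    n01: "\<not> d \<zero> \<one>"
    using assms(1) unfolding divisibility_def by blast+
  have canc: "\<And>a b c. c \<in> carrier R \<Longrightarrow> \<not> d \<zero> c \<Longrightarrow> a \<in> carrier R \<Longrightarrow> b \<in> carrier R \<Longrightarrow> d (a \<otimes> c) (b \<otimes> c) \<Longrightarrow> d a b"
    using assms(2) unfolding has_cancellation_def by blast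
  have I: "x \<in> ?I \<longleftrightarrow> x \<in> carrier R \<and> d \<zero> x" for x unfolding div_support_def by simp
  have z: "\<zero> \<in> ?I" using I refl by simp
  have neg: "\<ominus> a \<in> ?I" if "a \<in> ?I" for a
  proof -
    have "d \<zero> (\<zero> \<ominus> a)" using sub[of \<zero> \<zero> a] refl that I by simp
    thus ?thesis using that I by (simp add: minus_eq)
  qed
  have add: "a \<oplus> b \<in> ?I" if "a \<in> ?I" "b \<in> ?I" for a b
  proof -
    have "d \<zero> (a \<ominus> \<ominus> b)" using sub[of \<zero> a "\<ominus> b"] neg[OF that(2)] that I by simp
    thus ?thesis using that I by (simp add: minus_eq)
  qed
  have rc: "a \<otimes> x \<in> ?I" if "a \<in> ?I" "x \<in> carrier R" for a x
    using mul[of \<zero> a x] that I by simp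
  have lc: "x \<otimes> a \<in> ?I" if "a \<in> ?I" "x \<in> carrier R" for a x
    using rc[OF that] that I by (simp add: m_comm)
  have asg: "additive_subgroup ?I R"
    unfolding additive_subgroup_def
    by (rule add.subgroupI) (use I z neg add in auto)
  show ?thesis
  proof (rule primeidealI2[OF asg is_cring])
    show "carrier R \<noteq> ?I" using I n01 by auto
  next
    fix a b assume ab: "a \<in> carrier R" "b \<in> carrier R" "a \<otimes> b \<in> ?I"
    show "a \<in> ?I \<or> b \<in> ?I"
    proof (cases "a \<in> ?I")
      case False
      hence na: "\<not> d \<zero> a" using I ab by auto
      have "d (\<zero> \<otimes> a) (b \<otimes> a)" using ab I by (simp add: m_comm)
      hence "d \<zero> b" using canc[OF ab(1) na _ ab(2)] by simp
      thus ?thesis using I ab by auto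
    qed simp
  qed (use lc rc in auto)
qed

theorem proposition2p1:
  fixes R :: "('a, 'b) ring_scheme" and d :: "'a \<Rightarrow> 'a \<Rightarrow> bool"
  assumes "cring R"
    and "\<one>\<^bsub>R\<^esub> \<noteq> \<zero>\<^bsub>R\<^esub>"
    and "divisibility R d"
    and "has_cancellation R d"
  shows "primeideal (div_support R d) R"
  using cring.prop_aux[OF assms(1) assms(3) assms(4)] .

end
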